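(* Let $M\ge K$, let $\mathbf h_1,\dots,\mathbf h_K\in\mathbb C^{1\times M}$ be linearly independent, and let $\mu_1\ge\mu_2\ge\dots\ge\mu_K\ge0$ with $\sum_k\mu_k=1$. For powers $P_1,\dots,P_K\ge0$ let $\mathbf A^{(0)}=\mathbf I_M$ and $\mathbf A^{(k-1)}=\mathbf I_M+\sum_{j=1}^{k-1}P_j\mathbf h_j^H\mathbf h_j$, and define $R(P_1,\dots,P_K)=\sum_{k=1}^K\mu_k\log_2\left(1+P_k\mathbf h_k(\mathbf A^{(k-1)})^{-1}\mathbf h_k^H\right)$ and $$\mathcal C_{\mathrm{DPC}}(\boldsymbol\mu,\mathbf H,P)=\max_{P_k\ge0,\ \sum_kP_k\le P}R(P_1,\dots,P_K).$$ Then the allocation $P_k=\mu_kP$, $k=1,\dots,K$, is asymptotically optimal at high SNR: $$\lim_{P\to\infty}\left[\mathcal C_{\mathrm{DPC}}(\boldsymbol\mu,\mathbf H,P)-R(\mu_1P,\dots,\mu_KP)\right]=0.$$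
   Context: $\mathcal C_{\mathrm{DPC}}(\boldsymbol\mu,\mathbf H,P)$ is the maximum weighted sum rate $\sum_k\mu_kR_k$ over the dirty-paper-coding capacity region of the MIMO broadcast channel with $M$ transmit antennas and $K$ single-antenna users with channel row vectors $\mathbf h_k$, unit noise and total power $P$, written via the dual multiple-access channel with user $k$ decoded in the presence of users $1,\dots,k-1$. *)

theory Defs
  imports "HOL-Analysis.Analysis"
begin

definition lin_indep_C :: "nat \<Rightarrow> (nat \<Rightarrow> complex ^ 'm) \<Rightarrow> bool" where
  "lin_indep_C K h \<longleftrightarrow>
     (\<forall>c :: nat \<Rightarrow> complex. (\<Sum>k=1..K. c k *s h k) = 0 \<longrightarrow> (\<forall>k\<in>{1..K}. c k = 0))"

definition outer_H :: "complex ^ 'm \<Rightarrow> complex ^ 'm ^ 'm" where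
  "outer_H v = (\<chi> i j. cnj (v $ i) * v $ j)"

text \<open>A^(k-1) = I_M + sum_{j=1}^{k-1} P_j h_j^H h_j.\<close>
definition A_mat :: "(nat \<Rightarrow> complex ^ 'm) \<Rightarrow> (nat \<Rightarrow> real) \<Rightarrow> nat \<Rightarrow> complex ^ 'm ^ 'm" where
  "A_mat h p k = mat 1 + (\<Sum>j=1..<k. (\<chi> a b. complex_of_real (p j) * outer_H (h j) $ a $ b))"

definition quad_H :: "complex ^ 'm \<Rightarrow> complex ^ 'm ^ 'm \<Rightarrow> complex" where
  "quad_H v B = (\<Sum>i\<in>UNIV. \<Sum>j\<in>UNIV. v $ i * B $ i $ j * cnj (v $ j))"

definition wsr :: "nat \<Rightarrow> (nat \<Rightarrow> real) \<Rightarrow> (nat \<Rightarrow> complex ^ 'm) \<Rightarrow> (nat \<Rightarrow> real) \<Rightarrow> real" where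
  "wsr K \<mu> h p = (\<Sum>k=1..K. \<mu> k *
      log 2 (1 + p k * Re (quad_H (h k) (matrix_inv (A_mat h p k)))))"

definition C_DPC :: "nat \<Rightarrow> (nat \<Rightarrow> real) \<Rightarrow> (nat \<Rightarrow> complex ^ 'm) \<Rightarrow> real \<Rightarrow> real" where
  "C_DPC K \<mu> h P = (SUP p \<in> {p. (\<forall>k\<in>{1..K}. 0 \<le> p k) \<and> (\<Sum>k=1..K. p k) \<le> P}. wsr K \<mu> h p)"

end

theory Submission
  imports Defs
begin


definition hp :: "complex ^ 'm \<Rightarrow> complex ^ 'm \<Rightarrow> complex" where
  "hp x y = (\<Sum>i\<in>UNIV. cnj (x $ i) * y $ i)"

definition cv :: "complex ^ 'm \<Rightarrow> complex ^ 'm" where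
  "cv x = (\<chi> i. cnj (x $ i))"

lemma hp_zero_right[simp]: "hp x 0 = 0" by (simp add: hp_def)
lemma hp_zero_left[simp]: "hp 0 x = 0" by (simp add: hp_def)
lemma hp_add_right: "hp x (y + z) = hp x y + hp x z"
  by (simp add: hp_def distrib_left sum.distrib)
lemma hp_add_left: "hp (x + y) z = hp x z + hp y z"
  by (simp add: hp_def distrib_right sum.distrib)
lemma hp_diff_right: "hp x (y - z) = hp x y - hp x z"
  by (simp add: hp_def right_diff_distrib sum_subtractf)
lemma hp_diff_left: "hp (x - y) z = hp x z - hp y z"
  by (simp add: hp_def left_diff_distrib sum_subtractf)
lemma hp_scale_right: "hp x (c *s y) = c * hp x y"
  by (simp add: hp_def sum_distrib_left algebra_simps)
lemma hp_scale_left: "hp (c *s x) y = cnj c * hp x y"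
  by (simp add: hp_def sum_distrib_left algebra_simps)
lemma hp_sum_right: "hp x (\<Sum>j\<in>S. f j) = (\<Sum>j\<in>S. hp x (f j))"
  by (induction S rule: infinite_finite_induct) (simp_all add: hp_add_right)
lemma hp_sum_left: "hp (\<Sum>j\<in>S. f j) y = (\<Sum>j\<in>S. hp (f j) y)"
  by (induction S rule: infinite_finite_induct) (simp_all add: hp_add_left)
lemma hp_cnj: "cnj (hp x y) = hp y x"
  by (simp add: hp_def mult.commute)

lemma hp_self: "hp x x = complex_of_real (\<Sum>i\<in>UNIV. (cmod (x $ i))^2)"
  unfolding hp_def of_real_sum by (rule sum.cong) (simp_all only: complex_norm_square[symmetric] mult.commute of_real_power refl)
lemma hp_self_Re: "Re (hp x x) = (\<Sum>i\<in>UNIV. (cmod (x $ i))^2)"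
  by (simp add: hp_self)
lemma hp_self_Im: "Im (hp x x) = 0"
  by (simp add: hp_self)
lemma hp_self_nonneg: "0 \<le> Re (hp x x)"
  by (simp add: hp_self_Re sum_nonneg)
lemma hp_self_pos: "x \<noteq> 0 \<Longrightarrow> 0 < Re (hp x x)"
proof -
  assume "x \<noteq> 0"
  then obtain i where "x $ i \<noteq> 0" by (metis vec_eq_iff zero_index)
  then have "0 < (cmod (x $ i))^2" by simp
  also have "\<dots> \<le> (\<Sum>i\<in>UNIV. (cmod (x $ i))^2)"
    by (rule member_le_sum) auto
  finally show ?thesis by (simp add: hp_self_Re)
qed

lemma inner_hp: "x \<bullet> y = Re (hp x y)"
  by (simp add: inner_vec_def hp_def inner_complex_def Re_sum)

lemma hp_Re_CS: "2 * Re (hp x y) \<le> Re (hp x x) + Re (hp y y)"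
proof -
  have "0 \<le> Re (hp (x - y) (x - y))" by (rule hp_self_nonneg)
  also have "hp (x - y) (x - y) = hp x x - hp x y - hp y x + hp y y"
    by (simp add: hp_diff_left hp_diff_right)
  also have "Re (hp y x) = Re (hp x y)" by (metis hp_cnj cnj.sel(1))
  ultimately show ?thesis by simp
qed

definition Aop :: "(nat \<Rightarrow> complex^'m) \<Rightarrow> (nat \<Rightarrow> real) \<Rightarrow> nat \<Rightarrow> complex^'m \<Rightarrow> complex^'m" where
  "Aop h p k z = z + (\<Sum>j\<in>{1..<k}. (complex_of_real (p j) * hp (cv (h j)) z) *s cv (h j))"

lemma A_mat_mult: "A_mat h p k *v z = Aop h p k z"
proof -
  have "(A_mat h p k *v z) $ a = Aop h p k z $ a" for a
  proof -
    have "(A_mat h p k *v z) $ a = (\<Sum>b\<in>UNIV. (mat 1 $ a $ b) * z$b) +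
        (\<Sum>b\<in>UNIV. (\<Sum>j\<in>{1..<k}. complex_of_real (p j) * (cnj (h j $ a) * h j $ b)) * z$b)"
      by (simp add: A_mat_def matrix_vector_mult_def sum_component outer_H_def distrib_right sum.distrib)
    also have "(\<Sum>b\<in>UNIV. (mat 1 $ a $ b) * z$b) = (\<Sum>b\<in>UNIV. if a = b then z $ b else 0)"
      by (rule sum.cong) (auto simp: mat_def)
    also have "\<dots> = z $ a" by simp
    also have "(\<Sum>b\<in>UNIV. (\<Sum>j\<in>{1..<k}. complex_of_real (p j) * (cnj (h j $ a) * h j $ b)) * z$b)
       = (\<Sum>j\<in>{1..<k}. (complex_of_real (p j) * hp (cv (h j)) z) * cnj (h j $ a))"
      by (simp add: hp_def cv_def sum_distrib_left sum_distrib_right sum.swap[of _ UNIV] algebra_simps)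
    finally show ?thesis by (simp add: Aop_def sum_component cv_def)
  qed
  then show ?thesis by (simp add: vec_eq_iff)
qed

lemma Aop_add: "Aop h p k (x + y) = Aop h p k x + Aop h p k y"
  by (simp add: Aop_def hp_add_right vector_sadd_rdistrib distrib_left sum.distrib algebra_simps)
lemma Aop_diff: "Aop h p k (x - y) = Aop h p k x - Aop h p k y"
  by (simp add: Aop_def hp_diff_right vector_sub_rdistrib right_diff_distrib sum_subtractf algebra_simps)

lemma hp_Aop_right: "hp w (Aop h p k z) = hp w z +
   (\<Sum>j\<in>{1..<k}. complex_of_real (p j) * hp (cv (h j)) z * hp w (cv (h j)))"
  by (simp add: Aop_def hp_add_right hp_sum_right hp_scale_right)

lemma hp_Aop_sym: "hp (Aop h p k w) z = hp w (Aop h p k z)"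
proof -
  have "hp (Aop h p k w) z = cnj (hp z (Aop h p k w))" by (simp add: hp_cnj)
  also have "\<dots> = hp w z + (\<Sum>j\<in>{1..<k}. complex_of_real (p j) * hp (cv (h j)) z * hp w (cv (h j)))"
    unfolding hp_Aop_right by (simp add: hp_cnj ac_simps)
  finally show ?thesis by (simp add: hp_Aop_right)
qed

lemma hp_Aop_self_Re: "Re (hp z (Aop h p k z)) = Re (hp z z) +
   (\<Sum>j\<in>{1..<k}. p j * (cmod (hp (cv (h j)) z))^2)"
proof -
  have "hp (cv (h j)) z * hp z (cv (h j)) = complex_of_real ((cmod (hp (cv (h j)) z))^2)" for j
    by (metis hp_cnj complex_norm_square)
  then show ?thesis by (simp add: hp_Aop_right Re_sum mult.assoc)
qed

lemma hp_Aop_self_ge: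
  assumes "\<forall>j\<in>{1..<k}. 0 \<le> p j"
  shows "Re (hp z z) + (\<Sum>j\<in>{1..<k}. p j * (cmod (hp (cv (h j)) z))^2) = Re (hp z (Aop h p k z))"
    and "0 \<le> (\<Sum>j\<in>{1..<k}. p j * (cmod (hp (cv (h j)) z))^2)"
  using assms by (auto simp: hp_Aop_self_Re intro!: sum_nonneg)

lemma matrix_inv_right':
  fixes A :: "'a::semiring_1^'n^'m"
  assumes "invertible A"
  shows "A ** matrix_inv A = mat 1"
proof -
  from assms obtain A' where A': "A ** A' = mat 1 \<and> A' ** A = mat 1"
    unfolding invertible_def by blast
  show ?thesis using someI[of "\<lambda>B. A ** B = mat 1 \<and> B ** A = mat 1", OF A']
    unfolding matrix_inv_def by blast
qed

lemma quad_H_hp: "quad_H v B = hp (cv v) (B *v cv v)"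
  unfolding quad_H_def hp_def cv_def matrix_vector_mult_def
  by (rule sum.cong[OF refl]) (simp add: sum_distrib_left mult.assoc)

lemma A_mat_invertible:
  assumes "\<forall>j\<in>{1..<k}. 0 \<le> p j"
  shows "invertible (A_mat h p k)"
proof -
  have "z = 0" if "A_mat h p k *v z = 0" for z
  proof (rule ccontr)
    assume "z \<noteq> 0"
    then have "0 < Re (hp z z)" by (rule hp_self_pos)
    moreover have "Re (hp z (Aop h p k z)) = 0" using that by (simp add: A_mat_mult)
    ultimately show False using hp_Aop_self_ge[OF assms, where z=z and h=h] by linarith
  qed
  then have "\<exists>B. B ** A_mat h p k = mat 1" by (simp add: matrix_left_invertible_ker)
  then show ?thesis by (rule invertible_left_inverse[THEN iffD2])
qed




lemma scaleR_smult: "r *\<^sub>R (a *s (v::complex^'m)) = (complex_of_real r * a) *s v"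
proof (rule vec_eq_iff[THEN iffD2], rule allI)
  fix i
  show "(r *\<^sub>R (a *s v)) $ i = ((complex_of_real r * a) *s v) $ i"
    by (simp only: vector_scaleR_component vector_smult_component) (simp add: scaleR_conv_of_real)
qed

lemma decomp_exists:
  fixes u :: "nat \<Rightarrow> complex^'m" and J :: "nat set"
  assumes "finite J"
  obtains c v where "x = v + (\<Sum>j\<in>J. c j *s u j)" "\<forall>j\<in>J. hp (u j) v = 0"
proof -
  define S where "S = u ` J \<union> (\<lambda>j. \<i> *s u j) ` J"
  define W where "W = {w. \<exists>c. w = (\<Sum>j\<in>J. c j *s u j)}"
  obtain y z where y: "y \<in> span S" and z: "\<And>w. w \<in> span S \<Longrightarrow> orthogonal z w" and xyz: "x = y + z"
    using orthogonal_subspace_decomp_exists[of S x] by blast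
  have sub: "subspace W"
    unfolding subspace_def
  proof (intro conjI ballI allI)
    show "0 \<in> W" unfolding W_def by (rule CollectI, rule exI[of _ "\<lambda>_. 0"]) simp
  next
    fix a b assume "a \<in> W" "b \<in> W"
    then obtain ca cb where "a = (\<Sum>j\<in>J. ca j *s u j)" "b = (\<Sum>j\<in>J. cb j *s u j)"
      unfolding W_def by blast
    then have "a + b = (\<Sum>j\<in>J. (ca j + cb j) *s u j)"
      by (simp add: vector_sadd_rdistrib sum.distrib)
    then show "a + b \<in> W" unfolding W_def by (intro CollectI exI[of _ "\<lambda>j. ca j + cb j"])
  next
    fix r :: real and a assume "a \<in> W"
    then obtain ca where "a = (\<Sum>j\<in>J. ca j *s u j)"
      unfolding W_def by blast
    then have "r *\<^sub>R a = (\<Sum>j\<in>J. (complex_of_real r * ca j) *s u j)"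
      by (simp add: scaleR_sum_right scaleR_smult)
    then show "r *\<^sub>R a \<in> W" unfolding W_def by (intro CollectI exI[of _ "\<lambda>j. complex_of_real r * ca j"])
  qed
  have unit: "w *s u i = (\<Sum>j\<in>J. (if j = i then w else 0) *s u j)" if "i \<in> J" for i w
  proof -
    have "(\<Sum>j\<in>J. (if j = i then w else 0) *s u j) = (\<Sum>j\<in>J. if j = i then w *s u j else 0)"
      by (rule sum.cong) auto
    also have "\<dots> = w *s u i" using that assms by (simp add: sum.delta')
    finally show ?thesis by simp
  qed
  have "S \<subseteq> W"
  proof
    fix s assume "s \<in> S"
    then obtain i w where "i \<in> J" "s = w *s u i"
      unfolding S_def by (auto intro: vector_smult_lid[symmetric])
    then show "s \<in> W" unfolding W_def using unit by (intro CollectI exI[of _ "\<lambda>j. if j = i then w else 0"]) simp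
  qed
  then have "span S \<subseteq> W" using sub by (rule span_minimal)
  with y obtain c where yc: "y = (\<Sum>j\<in>J. c j *s u j)" unfolding W_def by blast
  have "hp (u j) z = 0" if j: "j \<in> J" for j
  proof -
    have "u j \<in> span S" "\<i> *s u j \<in> span S" using j unfolding S_def by (auto intro: span_base)
    then have "z \<bullet> u j = 0" "z \<bullet> (\<i> *s u j) = 0" using z unfolding orthogonal_def by auto
    then have "Re (hp z (u j)) = 0" "Re (\<i> * hp z (u j)) = 0"
      by (simp_all add: inner_hp hp_scale_right)
    then have "hp z (u j) = 0" by (simp add: complex_eq_iff)
    then show ?thesis by (metis hp_cnj complex_cnj_zero)
  qed
  then show ?thesis using that[of z c] xyz yc by (simp add: add.commute)
qed

lemma decomp_nonzero:
  assumes li: "lin_indep_C K h" and k: "k \<in> {1..K}"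
    and eq: "cv (h k) = v + (\<Sum>j\<in>{1..<k}. c j *s cv (h j))"
  shows "v \<noteq> 0"
proof
  assume v0: "v = 0"
  define d where "d j = (if j < k then - cnj (c j) else if j = k then 1 else 0)" for j
  have hk: "h k $ i = (\<Sum>j\<in>{1..<k}. cnj (c j) * h j $ i)" for i
  proof -
    have "cv (h k) $ i = (\<Sum>j\<in>{1..<k}. c j * cnj (h j $ i))"
      using eq v0 by (simp add: cv_def)
    then have "cnj (h k $ i) = (\<Sum>j\<in>{1..<k}. c j * cnj (h j $ i))"
      by (simp add: cv_def)
    then have "cnj (cnj (h k $ i)) = cnj (\<Sum>j\<in>{1..<k}. c j * cnj (h j $ i))" by simp
    then show ?thesis by simp
  qed
  have "(\<Sum>j=1..K. d j *s h j) = 0"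
  proof -
    have "(\<Sum>j=1..K. d j *s h j) $ i = 0" for i
    proof -
      have split: "{1..K} = {1..<k} \<union> {k..K}" using k by auto
      have "(\<Sum>j=1..K. d j *s h j) $ i = (\<Sum>j\<in>{1..<k}. d j * h j $ i) + (\<Sum>j\<in>{k..K}. d j * h j $ i)"
        unfolding split by (simp add: sum.union_disjoint ivl_disj_int)
      also have "(\<Sum>j\<in>{k..K}. d j * h j $ i) = d k * h k $ i + (\<Sum>j\<in>{Suc k..K}. d j * h j $ i)"
        using k by (simp add: sum.atLeast_Suc_atMost)
      also have "(\<Sum>j\<in>{Suc k..K}. d j * h j $ i) = 0" by (rule sum.neutral) (auto simp: d_def)
      also have "(\<Sum>j\<in>{1..<k}. d j * h j $ i) = - (\<Sum>j\<in>{1..<k}. cnj (c j) * h j $ i)"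
        by (simp add: d_def sum_negf[symmetric])
      finally show ?thesis using hk[of i] by (simp add: d_def)
    qed
    then show ?thesis by (simp add: vec_eq_iff)
  qed
  then have "d k = 0" using li k unfolding lin_indep_C_def by blast
  then show False by (simp add: d_def)
qed



lemma amgm_aux:
  fixes a c t p m :: real
  assumes "0 \<le> a" "0 \<le> c" "0 < t" "0 < m" "m \<le> p"
  shows "c * a \<le> t * (p * a^2) + c^2 / (t * m)"
proof -
  have pp: "0 < p" using assms by linarith
  have "0 \<le> (t * p * a - c)^2" by simp
  then have "2 * (t * p) * (c * a) \<le> (t * p)^2 * a^2 + c^2" by (simp add: power2_eq_square algebra_simps)
  then have "2 * (c * a) \<le> t * (p * a^2) + c^2 / (t * p)"
    using assms pp by (simp add: field_simps power2_eq_square)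
  moreover have "c^2 / (t * p) \<le> c^2 / (t * m)"
    using assms by (intro divide_left_mono) (auto intro: mult_pos_pos)
  moreover have "0 \<le> c * a" "0 \<le> t * (p * a^2)" using assms pp by auto
  ultimately show ?thesis by linarith
qed

lemma Q_bounds:
  fixes h :: "nat \<Rightarrow> complex^'m" and p :: "nat \<Rightarrow> real" and k :: nat
  defines "x \<equiv> cv (h k)"
  defines "Q \<equiv> Re (quad_H (h k) (matrix_inv (A_mat h p k)))"
  assumes nn: "\<forall>j\<in>{1..<k}. 0 \<le> p j"
    and dec: "x = v + (\<Sum>j\<in>{1..<k}. c j *s cv (h j))"
    and orth: "\<forall>j\<in>{1..<k}. hp (cv (h j)) v = 0"
  shows "Re (hp v v) \<le> Q" "Q \<le> Re (hp x x)"
    "\<And>m t. 0 < m \<Longrightarrow> 0 < t \<Longrightarrow> (\<forall>j\<in>{1..<k}. m \<le> p j) \<Longrightarrow>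
        Q \<le> Re (hp v v) + t * Re (hp x x) + (\<Sum>j\<in>{1..<k}. (cmod (c j))^2) / (t * m)"
proof -
  define A where "A = A_mat h p k"
  define y where "y = matrix_inv A *v x"
  have inv: "invertible A" unfolding A_def using nn by (rule A_mat_invertible)
  have Ay: "Aop h p k y = x"
  proof -
    have "A *v y = (A ** matrix_inv A) *v x" by (simp add: y_def matrix_vector_mul_assoc)
    also have "\<dots> = x" using matrix_inv_right'[OF inv] by simp
    finally show ?thesis by (simp add: A_def A_mat_mult)
  qed
  have Qy: "Q = Re (hp x y)" unfolding Q_def quad_H_hp x_def y_def A_def ..
  define S where "S = (\<Sum>j\<in>{1..<k}. p j * (cmod (hp (cv (h j)) y))^2)"
  have S0: "0 \<le> S" unfolding S_def using nn by (auto intro!: sum_nonneg)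
  have "Re (hp x y) = Re (hp y x)" by (metis hp_cnj cnj.sel(1))
  also have "\<dots> = Re (hp y y) + S" unfolding S_def using Ay hp_Aop_self_Re[of y h p k] by simp
  finally have QS: "Q = Re (hp y y) + S" using Qy by simp
  have yy: "0 \<le> Re (hp y y)" by (rule hp_self_nonneg)
  have "2 * Re (hp x y) \<le> Re (hp x x) + Re (hp y y)" by (rule hp_Re_CS)
  then show QG: "Q \<le> Re (hp x x)" using QS Qy S0 by linarith
  have Av: "Aop h p k v = v" using orth by (simp add: Aop_def)
  have vx: "hp v x = hp v v"
  proof -
    have "hp v (\<Sum>j\<in>{1..<k}. c j *s cv (h j)) = 0"
    proof -
      have "hp v (\<Sum>j\<in>{1..<k}. c j *s cv (h j)) = (\<Sum>j\<in>{1..<k}. c j * hp v (cv (h j)))"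
        by (simp add: hp_sum_right hp_scale_right)
      also have "\<dots> = 0" using orth by (intro sum.neutral) (metis hp_cnj complex_cnj_zero mult_zero_right)
      finally show ?thesis .
    qed
    then show ?thesis using dec by (simp add: hp_add_right)
  qed
  have yv: "hp y v = hp v v"
  proof -
    have "hp y v = hp y (Aop h p k v)" using Av by simp
    also have "\<dots> = hp (Aop h p k y) v" by (simp add: hp_Aop_sym)
    also have "\<dots> = cnj (hp v x)" using Ay by (simp add: hp_cnj)
    also have "\<dots> = hp v v" using vx by (simp add: hp_cnj)
    finally show ?thesis .
  qed
  have "0 \<le> Re (hp (y - v) (Aop h p k (y - v)))"
    using hp_Aop_self_ge[OF nn, where z="y - v" and h=h] hp_self_nonneg[of "y - v"] by linarith
  also have "hp (y - v) (Aop h p k (y - v)) = hp y x - hp y v - hp v x + hp v v"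
    by (simp add: Aop_diff Ay Av hp_diff_left hp_diff_right)
  finally have "0 \<le> Re (hp y x) - Re (hp v v)" using vx yv by simp
  moreover have "Re (hp y x) = Q" using Qy by (metis hp_cnj cnj.sel(1))
  ultimately show "Re (hp v v) \<le> Q" by linarith
  fix m t :: real
  assume m: "0 < m" and t: "0 < t" and pm: "\<forall>j\<in>{1..<k}. m \<le> p j"
  have vy: "hp v y = hp v v"
  proof -
    have "hp v y = hp (Aop h p k v) y" using Av by simp
    also have "\<dots> = hp v x" by (simp add: hp_Aop_sym Ay)
    finally show ?thesis using vx by simp
  qed
  have "hp x y = hp v v + (\<Sum>j\<in>{1..<k}. cnj (c j) * hp (cv (h j)) y)"
    using dec vy by (simp add: hp_add_left hp_sum_left hp_scale_left)
  then have "Q = Re (hp v v) + Re (\<Sum>j\<in>{1..<k}. cnj (c j) * hp (cv (h j)) y)"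
    using Qy by simp
  also have "Re (\<Sum>j\<in>{1..<k}. cnj (c j) * hp (cv (h j)) y) \<le> cmod (\<Sum>j\<in>{1..<k}. cnj (c j) * hp (cv (h j)) y)"
    by (rule complex_Re_le_cmod)
  also have "\<dots> \<le> (\<Sum>j\<in>{1..<k}. cmod (c j) * cmod (hp (cv (h j)) y))"
    by (rule order_trans[OF norm_sum]) (simp add: norm_mult)
  also have "\<dots> \<le> (\<Sum>j\<in>{1..<k}. t * (p j * (cmod (hp (cv (h j)) y))^2) + (cmod (c j))^2 / (t * m))"
    using pm m t by (intro sum_mono amgm_aux) auto
  also have "\<dots> = t * S + (\<Sum>j\<in>{1..<k}. (cmod (c j))^2) / (t * m)"
    by (simp add: S_def sum.distrib sum_distrib_left sum_divide_distrib)
  finally have "Q \<le> Re (hp v v) + t * S + (\<Sum>j\<in>{1..<k}. (cmod (c j))^2) / (t * m)" by simp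
  moreover have "t * S \<le> t * Re (hp x x)" using QS QG yy t by (intro mult_left_mono) auto
  ultimately show "Q \<le> Re (hp v v) + t * Re (hp x x) + (\<Sum>j\<in>{1..<k}. (cmod (c j))^2) / (t * m)"
    by linarith
qed



lemma gibbs_term:
  fixes \<mu> g P p :: real
  assumes "0 \<le> \<mu>" "0 < g" "0 < P" "0 \<le> p"
  shows "\<mu> * ln (1 + p * g) - \<mu> * ln (1 + \<mu> * P * g) \<le> p / P - \<mu> + 1 / (P * g)"
proof -
  define D where "D = 1 + \<mu> * P * g"
  have D: "0 < D" unfolding D_def using assms by (simp add: add_pos_nonneg)
  have pg: "0 < 1 + p * g" using assms by (simp add: add_pos_nonneg)
  have "ln (1 + p * g) - ln D = ln ((1 + p * g) / D)" using D pg by (simp add: ln_divide_pos)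
  also have "\<dots> \<le> (1 + p * g) / D - 1" using D pg by (intro ln_le_minus_one) simp
  finally have l: "\<mu> * (ln (1 + p * g) - ln D) \<le> \<mu> * ((1 + p * g) / D - 1)"
    using assms(1) by (intro mult_left_mono)
  have e1: "\<mu> * ((1 + p * g) / D - 1) = \<mu> * p * g / D - \<mu> + \<mu> / D"
    using D by (simp add: field_simps)
  have a1: "\<mu> * p * g / D \<le> p / P"
  proof -
    have "\<mu> * p * g * P \<le> p * D" unfolding D_def using assms by (simp add: algebra_simps)
    then show ?thesis using D assms by (simp add: divide_simps mult.commute mult.left_commute)
  qed
  have a2: "\<mu> / D \<le> 1 / (P * g)"
  proof -
    have "\<mu> * (P * g) \<le> D" unfolding D_def by (simp add: mult.assoc)
    then show ?thesis using D assms by (simp add: divide_simps)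
  qed
  show ?thesis using l e1 a1 a2 unfolding D_def by (simp add: right_diff_distrib)
qed

lemma bound_term:
  fixes \<mu> g G P p q :: real
  assumes "0 \<le> \<mu>" "\<mu> \<le> 1" "0 < g" "g \<le> G" "0 < P" "0 \<le> p" "p \<le> P" "0 \<le> q" "q \<le> G"
  shows "\<mu> * ln (1 + p * q) - \<mu> * ln (1 + \<mu> * P * g) \<le> ln (G / g) + 1"
proof (cases "\<mu> = 0")
  case True
  have "1 \<le> G / g" using assms by simp
  then show ?thesis using True by simp
next
  case False
  then have m: "0 < \<mu>" using assms by simp
  have G: "0 < G" using assms by linarith
  have "1 + p * q \<le> 1 + P * G" using assms by (simp add: mult_mono)
  then have "ln (1 + p * q) \<le> ln (1 + P * G)"
    using assms by (intro ln_mono) (auto simp: add_pos_nonneg)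
  moreover have "(1 + P * G) / (1 + \<mu> * P * g) \<le> G / (\<mu> * g)"
  proof -
    have "\<mu> * g \<le> G" using assms m by (metis mult_left_le_one_le less_imp_le mult.commute order_trans order_refl)
    then have "(1 + P * G) * (\<mu> * g) \<le> G * (1 + \<mu> * P * g)" by (simp add: algebra_simps)
    then show ?thesis using assms m by (simp add: divide_simps add_pos_nonneg mult.commute mult.left_commute)
  qed
  then have "ln ((1 + P * G) / (1 + \<mu> * P * g)) \<le> ln (G / (\<mu> * g))"
    using assms m G by (intro ln_mono) (auto simp: add_pos_nonneg)
  then have "ln (1 + P * G) - ln (1 + \<mu> * P * g) \<le> ln (G / g) + ln (1 / \<mu>)"
    using assms m G by (simp add: ln_divide_pos add_pos_nonneg ln_mult)
  moreover have "ln (1 / \<mu>) \<le> 1 / \<mu> - 1" using m by (intro ln_le_minus_one) simp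
  ultimately have "ln (1 + p * q) - ln (1 + \<mu> * P * g) \<le> ln (G / g) + (1 / \<mu> - 1)" by linarith
  then have "\<mu> * (ln (1 + p * q) - ln (1 + \<mu> * P * g)) \<le> \<mu> * (ln (G / g) + (1 / \<mu> - 1))"
    using m by (simp add: mult_left_mono)
  also have "\<dots> = \<mu> * ln (G / g) + 1 - \<mu>" using m by (simp add: field_simps)
  also have "\<dots> \<le> ln (G / g) + 1"
  proof -
    have "0 \<le> ln (G / g)" using assms by simp
    then have "\<mu> * ln (G / g) \<le> ln (G / g)" using assms by (simp add: mult_left_le_one_le)
    then show ?thesis using m by linarith
  qed
  finally show ?thesis by (simp add: right_diff_distrib)
qed



lemma abstract_bound:
  fixes K :: nat and \<mu> :: "nat \<Rightarrow> real" and Q :: "nat \<Rightarrow> (nat \<Rightarrow> real) \<Rightarrow> real"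
    and g G C :: "nat \<Rightarrow> real"
  assumes mono: "\<And>i j. 1 \<le> i \<Longrightarrow> i \<le> j \<Longrightarrow> j \<le> K \<Longrightarrow> \<mu> j \<le> \<mu> i"
    and mu0: "\<And>k. k \<in> {1..K} \<Longrightarrow> 0 \<le> \<mu> k"
    and musum: "(\<Sum>k=1..K. \<mu> k) = 1"
    and gpos: "\<And>k. k \<in> {1..K} \<Longrightarrow> 0 < g k"
    and gG: "\<And>k. k \<in> {1..K} \<Longrightarrow> g k \<le> G k"
    and C0: "\<And>k. k \<in> {1..K} \<Longrightarrow> 0 \<le> C k"
    and Qb: "\<And>k p. k \<in> {1..K} \<Longrightarrow> \<forall>j\<in>{1..<k}. 0 \<le> p j \<Longrightarrow> g k \<le> Q k p \<and> Q k p \<le> G k"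
    and Qs: "\<And>k p m t. k \<in> {1..K} \<Longrightarrow> 0 < m \<Longrightarrow> 0 < t \<Longrightarrow> \<forall>j\<in>{1..<k}. m \<le> p j \<Longrightarrow>
               Q k p \<le> g k + t * G k + C k / (t * m)"
    and e: "0 < e"
  shows "\<exists>P0>0. \<forall>P\<ge>P0. \<forall>p. (\<forall>k\<in>{1..K}. 0 \<le> p k) \<and> (\<Sum>k=1..K. p k) \<le> P \<longrightarrow>
     (\<Sum>k=1..K. \<mu> k * ln (1 + p k * Q k p)) \<le>
     (\<Sum>k=1..K. \<mu> k * ln (1 + (\<mu> k * P) * Q k (\<lambda>k. \<mu> k * P))) + e"
proof -
  define I where "I = {1..K}"
  have finI: "finite I" unfolding I_def by simp
  have Ine: "I \<noteq> {}"
  proof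
    assume "I = {}" then show False using musum unfolding I_def by simp
  qed
  have mu1: "\<mu> k \<le> 1" if "k \<in> I" for k
  proof -
    have "\<mu> k \<le> (\<Sum>k\<in>I. \<mu> k)" using that finI mu0 unfolding I_def by (intro member_le_sum) auto
    then show ?thesis using musum unfolding I_def by simp
  qed
  define \<rho> where "\<rho> = Min (g ` I)"
  define Gm where "Gm = Max (G ` I)"
  define Cm where "Cm = Max (C ` I)"
  define J where "J = {k\<in>I. 0 < \<mu> k}"
  have Jne: "J \<noteq> {}"
  proof
    assume "J = {}"
    then have "\<forall>k\<in>I. \<mu> k = 0" using mu0 unfolding J_def I_def by force
    then show False using musum unfolding I_def by simp
  qed
  have finJ: "finite J" unfolding J_def using finI by simp
  define \<mu>m where "\<mu>m = Min (\<mu> ` J)"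
  have \<rho>pos: "0 < \<rho>" unfolding \<rho>_def using finI Ine gpos I_def by auto
  have \<rho>le: "\<rho> \<le> g k" if "k \<in> I" for k unfolding \<rho>_def using finI that by simp
  have Gmge: "G k \<le> Gm" if "k \<in> I" for k unfolding Gm_def using finI that by simp
  have Cmge: "C k \<le> Cm" if "k \<in> I" for k unfolding Cm_def using finI that by simp
  obtain k0 where k0: "k0 \<in> I" using Ine by blast
  have \<rho>Gm: "\<rho> \<le> Gm" using \<rho>le[OF k0] gG[of k0] Gmge[OF k0] k0 unfolding I_def by linarith
  have Gmpos: "0 < Gm" using \<rho>pos \<rho>Gm by linarith
  have Cm0: "0 \<le> Cm" using Cmge[OF k0] C0[of k0] k0 unfolding I_def by linarith
  have \<mu>mpos: "0 < \<mu>m" unfolding \<mu>m_def using finJ Jne J_def by auto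
  have \<mu>mle: "\<mu>m \<le> \<mu> k" if "k \<in> I" "0 < \<mu> k" for k
    unfolding \<mu>m_def using finJ that J_def by simp
  define b where "b = ln (Gm / \<rho>) + 1"
  have b1: "1 \<le> b" unfolding b_def using \<rho>Gm \<rho>pos by simp
  define \<theta> where "\<theta> = exp (- (real K * b + 1) / \<mu>m)"
  have \<theta>pos: "0 < \<theta>" unfolding \<theta>_def by simp
  have ln\<theta>: "\<mu>m * ln \<theta> = - (real K * b + 1)" unfolding \<theta>_def using \<mu>mpos by simp
  define \<delta> where "\<delta> = \<theta> * \<mu>m * \<rho> / (2 * Gm)"
  have \<delta>pos: "0 < \<delta>" unfolding \<delta>_def using \<theta>pos \<mu>mpos \<rho>pos Gmpos by simp
  define \<epsilon> where "\<epsilon> = e / 2"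
  have \<epsilon>pos: "0 < \<epsilon>" unfolding \<epsilon>_def using e by simp
  define t where "t = \<epsilon> * \<rho> / (2 * Gm)"
  have tpos: "0 < t" unfolding t_def using \<epsilon>pos \<rho>pos Gmpos by simp
  define P0 where "P0 = 1 + 2 / (\<theta> * \<mu>m * \<rho>) + 2 * real K / (\<rho> * e) + 2 * Cm / (t * \<delta> * \<epsilon> * \<rho>)"
  have P0pos: "0 < P0" unfolding P0_def using \<theta>pos \<mu>mpos \<rho>pos e tpos \<delta>pos \<epsilon>pos Cm0
    by (intro add_pos_nonneg) auto
  show ?thesis
  proof (intro exI[of _ P0] conjI allI impI P0pos)
    fix P :: real and p :: "nat \<Rightarrow> real"
    assume PP0: "P0 \<le> P" and fp: "(\<forall>k\<in>{1..K}. 0 \<le> p k) \<and> (\<Sum>k=1..K. p k) \<le> P"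
    have p0: "0 \<le> p k" if "k \<in> I" for k using fp that unfolding I_def by blast
    have psum: "(\<Sum>k\<in>I. p k) \<le> P" using fp unfolding I_def by blast
    have pleP: "p k \<le> P" if "k \<in> I" for k
    proof -
      have "p k \<le> sum p I" using finI that p0 by (intro member_le_sum) auto
      then show ?thesis using psum by linarith
    qed
    have P1: "2 / (\<theta> * \<mu>m * \<rho>) \<le> P" "2 * real K / (\<rho> * e) \<le> P"
         "2 * Cm / (t * \<delta> * \<epsilon> * \<rho>) \<le> P" "1 \<le> P"
      using PP0 \<theta>pos \<mu>mpos \<rho>pos e tpos \<delta>pos \<epsilon>pos Cm0 unfolding P0_def
      by (smt (verit) divide_nonneg_pos mult_pos_pos of_nat_0_le_iff mult_nonneg_nonneg)+
    have Ppos: "0 < P" using P1 by linarith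
    define Lo where "Lo = (\<Sum>k\<in>I. \<mu> k * ln (1 + \<mu> k * P * g k))"
    have Lo_le: "Lo \<le> (\<Sum>k\<in>I. \<mu> k * ln (1 + (\<mu> k * P) * Q k (\<lambda>k. \<mu> k * P)))"
      unfolding Lo_def
    proof (rule sum_mono)
      fix k assume k: "k \<in> I"
      have nn: "\<forall>j\<in>{1..<k}. 0 \<le> \<mu> j * P" using mu0 Ppos k unfolding I_def by auto
      have "g k \<le> Q k (\<lambda>k. \<mu> k * P)" using Qb[OF _ nn] k unfolding I_def by blast
      then have "\<mu> k * P * g k \<le> (\<mu> k * P) * Q k (\<lambda>k. \<mu> k * P)"
        using mu0 Ppos k unfolding I_def by (intro mult_left_mono) auto
      moreover have "0 \<le> \<mu> k * P * g k" using mu0[of k] Ppos gpos[of k] k unfolding I_def by simp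
      ultimately have "ln (1 + \<mu> k * P * g k) \<le> ln (1 + (\<mu> k * P) * Q k (\<lambda>k. \<mu> k * P))"
        by (intro ln_mono) auto
      then show "\<mu> k * ln (1 + \<mu> k * P * g k) \<le> \<mu> k * ln (1 + (\<mu> k * P) * Q k (\<lambda>k. \<mu> k * P))"
        using mu0 k unfolding I_def by (intro mult_left_mono) auto
    qed
    have main: "(\<Sum>k\<in>I. \<mu> k * ln (1 + p k * Q k p)) \<le> Lo + e"
    proof (cases "\<forall>j\<in>I. 0 < \<mu> j \<longrightarrow> \<delta> * P \<le> p j")
      case True
      have step: "\<mu> k * ln (1 + p k * Q k p) - \<mu> k * ln (1 + \<mu> k * P * g k)
            \<le> p k / P - \<mu> k + 1 / (P * \<rho>) + \<mu> k * \<epsilon>" if k: "k \<in> I" for k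
      proof -
        have kK: "k \<in> {1..K}" using k unfolding I_def .
        have A: "\<mu> k * ln (1 + p k * Q k p) \<le> \<mu> k * ln (1 + p k * g k) + \<mu> k * \<epsilon>"
        proof (cases "\<mu> k = 0")
          case True then show ?thesis by simp
        next
          case False
          then have mk: "0 < \<mu> k" using mu0[OF kK] by simp
          have pj: "\<forall>j\<in>{1..<k}. \<delta> * P \<le> p j"
          proof
            fix j assume j: "j \<in> {1..<k}"
            have "\<mu> k \<le> \<mu> j" using j kK by (intro mono) auto
            then have "0 < \<mu> j" using mk by linarith
            then show "\<delta> * P \<le> p j" using True j kK unfolding I_def by auto
          qed
          have Qk: "Q k p \<le> g k + t * G k + C k / (t * (\<delta> * P))"
            using Qs[OF kK _ tpos pj] \<delta>pos Ppos by simp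
          have t1: "t * G k \<le> \<epsilon> * \<rho> / 2"
          proof -
            have "t * G k \<le> t * Gm" using Gmge[OF k] tpos by simp
            also have "\<dots> = \<epsilon> * \<rho> / 2" unfolding t_def using Gmpos by simp
            finally show ?thesis .
          qed
          have t2: "C k / (t * (\<delta> * P)) \<le> \<epsilon> * \<rho> / 2"
          proof -
            have "C k / (t * (\<delta> * P)) \<le> Cm / (t * (\<delta> * P))"
              using Cmge[OF k] tpos \<delta>pos Ppos by (intro divide_right_mono) auto
            also have "\<dots> \<le> \<epsilon> * \<rho> / 2"
              using P1(3) tpos \<delta>pos Ppos \<epsilon>pos \<rho>pos by (simp add: field_simps)
            finally show ?thesis .
          qed
          have Qk2: "Q k p \<le> g k * (1 + \<epsilon>)"
          proof -
            have "\<epsilon> * \<rho> \<le> \<epsilon> * g k" using \<rho>le[OF k] \<epsilon>pos by (intro mult_left_mono) auto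
            moreover have "g k * (1 + \<epsilon>) = g k + \<epsilon> * g k" by (simp add: algebra_simps)
            ultimately show ?thesis using Qk t1 t2 by linarith
          qed
          have pQ: "0 \<le> Q k p" using Qb[OF kK] p0 gpos[OF kK] k unfolding I_def
            by (meson atLeastLessThan_iff atLeastAtMost_iff less_imp_le order_trans)
          have "1 + p k * Q k p \<le> 1 + p k * (g k * (1 + \<epsilon>))"
            using Qk2 p0[OF k] by (simp add: mult_left_mono)
          also have "\<dots> \<le> (1 + p k * g k) * (1 + \<epsilon>)"
            using \<epsilon>pos by (simp add: algebra_simps)
          finally have "ln (1 + p k * Q k p) \<le> ln ((1 + p k * g k) * (1 + \<epsilon>))"
            using p0[OF k] pQ by (intro ln_mono) (auto intro!: add_pos_nonneg)
          also have "\<dots> = ln (1 + p k * g k) + ln (1 + \<epsilon>)"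
            using p0[OF k] gpos[OF kK] \<epsilon>pos by (intro ln_mult_pos) (auto intro!: add_pos_nonneg)
          also have "ln (1 + \<epsilon>) \<le> \<epsilon>" using \<epsilon>pos by (intro ln_add_one_self_le_self) simp
          finally have "ln (1 + p k * Q k p) \<le> ln (1 + p k * g k) + \<epsilon>" by simp
          then show ?thesis using mk by (simp add: mult_left_mono distrib_left[symmetric])
        qed
        have B: "\<mu> k * ln (1 + p k * g k) - \<mu> k * ln (1 + \<mu> k * P * g k) \<le> p k / P - \<mu> k + 1 / (P * g k)"
          using mu0[OF kK] gpos[OF kK] Ppos p0[OF k] by (rule gibbs_term)
        have "1 / (P * g k) \<le> 1 / (P * \<rho>)"
          using \<rho>le[OF k] \<rho>pos Ppos by (intro divide_left_mono mult_left_mono) auto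
        then show ?thesis using A B by linarith
      qed
      have "(\<Sum>k\<in>I. \<mu> k * ln (1 + p k * Q k p)) - Lo
          = (\<Sum>k\<in>I. \<mu> k * ln (1 + p k * Q k p) - \<mu> k * ln (1 + \<mu> k * P * g k))"
        unfolding Lo_def by (simp add: sum_subtractf)
      also have "\<dots> \<le> (\<Sum>k\<in>I. p k / P - \<mu> k + 1 / (P * \<rho>) + \<mu> k * \<epsilon>)"
        using step by (rule sum_mono)
      also have "\<dots> = (\<Sum>k\<in>I. p k) / P - 1 + real K / (P * \<rho>) + \<epsilon>"
        using musum unfolding I_def by (simp add: sum.distrib sum_subtractf sum_divide_distrib[symmetric] sum_distrib_right[symmetric])
      also have "\<dots> \<le> real K / (P * \<rho>) + \<epsilon>"
        using psum Ppos by (simp add: divide_le_eq)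
      also have "real K / (P * \<rho>) \<le> e / 2"
        using P1(2) Ppos \<rho>pos e by (simp add: field_simps)
      finally show ?thesis unfolding \<epsilon>_def by simp
    next
      case False
      then obtain j where j: "j \<in> I" "0 < \<mu> j" "p j < \<delta> * P" by auto
      have jK: "j \<in> {1..K}" using j(1) unfolding I_def .
      have Tk: "\<mu> k * ln (1 + p k * Q k p) - \<mu> k * ln (1 + \<mu> k * P * g k) \<le> b" if k: "k \<in> I" for k
      proof -
        have kK: "k \<in> {1..K}" using k unfolding I_def .
        have nn: "\<forall>j\<in>{1..<k}. 0 \<le> p j" using p0 kK unfolding I_def by auto
        have "\<mu> k * ln (1 + p k * Q k p) - \<mu> k * ln (1 + \<mu> k * P * g k) \<le> ln (G k / g k) + 1"
          using mu0[OF kK] mu1[OF k] gpos[OF kK] gG[OF kK] Ppos p0[OF k] pleP[OF k] Qb[OF kK nn]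
          by (intro bound_term) (auto intro: order_trans[OF less_imp_le[OF gpos[OF kK]]])
        also have "ln (G k / g k) \<le> ln (Gm / \<rho>)"
        proof (rule ln_mono)
          show "0 < G k / g k" using gpos[OF kK] gG[OF kK] by simp
          show "G k / g k \<le> Gm / \<rho>"
            using gpos[OF kK] gG[OF kK] \<rho>le[OF k] \<rho>pos Gmge[OF k]
            by (meson divide_mono less_le_trans less_imp_le)
        qed
        finally show ?thesis unfolding b_def by simp
      qed
      have Tj: "\<mu> j * ln (1 + p j * Q j p) - \<mu> j * ln (1 + \<mu> j * P * g j) \<le> - (real K * b + 1)"
      proof -
        have nn: "\<forall>i\<in>{1..<j}. 0 \<le> p i" using p0 jK unfolding I_def by auto
        have Qj: "0 \<le> Q j p" "Q j p \<le> G j" using Qb[OF jK nn] gpos[OF jK] by auto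
        have gj: "0 < g j" using gpos[OF jK] .
        have Gj: "0 < G j" using gj gG[OF jK] by linarith
        have "p j * Q j p \<le> \<delta> * P * G j"
          using j(3) Qj p0[OF j(1)] by (intro mult_mono) auto
        then have "ln (1 + p j * Q j p) \<le> ln (1 + \<delta> * P * G j)"
          using p0[OF j(1)] Qj by (intro ln_mono) (auto intro!: add_pos_nonneg)
        also have "\<dots> - ln (1 + \<mu> j * P * g j) = ln ((1 + \<delta> * P * G j) / (1 + \<mu> j * P * g j))"
          using \<delta>pos Ppos Gj j(2) gj by (subst ln_divide_pos) (auto intro!: add_pos_pos)
        also have "(1 + \<delta> * P * G j) / (1 + \<mu> j * P * g j) \<le> \<theta>"
        proof -
          have "(1 + \<delta> * P * G j) / (1 + \<mu> j * P * g j) \<le> (1 + \<delta> * P * G j) / (\<mu> j * P * g j)"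
          proof (rule divide_left_mono)
            have "0 < \<mu> j * P * g j" using Ppos j(2) gj by simp
            then show "0 < (1 + \<mu> j * P * g j) * (\<mu> j * P * g j)" "\<mu> j * P * g j \<le> 1 + \<mu> j * P * g j"
              by (simp_all add: add_pos_pos)
            show "0 \<le> 1 + \<delta> * P * G j" using \<delta>pos Ppos Gj by (simp add: add_nonneg_nonneg)
          qed
          also have "\<dots> = 1 / (\<mu> j * P * g j) + \<delta> * G j / (\<mu> j * g j)"
            using Ppos j(2) gj by (simp add: field_simps)
          also have "1 / (\<mu> j * P * g j) \<le> 1 / (\<mu>m * P * \<rho>)"
            using \<mu>mle[OF j(1,2)] \<rho>le[OF j(1)] \<mu>mpos Ppos \<rho>pos
            by (intro divide_left_mono mult_mono) auto
          also have "1 / (\<mu>m * P * \<rho>) \<le> \<theta> / 2"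
            using P1(1) \<theta>pos \<mu>mpos \<rho>pos Ppos by (simp add: field_simps)
          also have "\<delta> * G j / (\<mu> j * g j) \<le> \<delta> * Gm / (\<mu>m * \<rho>)"
            using \<mu>mle[OF j(1,2)] \<rho>le[OF j(1)] \<mu>mpos \<rho>pos Gmge[OF j(1)] \<delta>pos Gj
            by (intro frac_le mult_mono mult_left_mono) auto
          also have "\<delta> * Gm / (\<mu>m * \<rho>) = \<theta> / 2"
            unfolding \<delta>_def using Gmpos \<mu>mpos \<rho>pos by (simp add: field_simps)
          finally show ?thesis by simp
        qed
        then have "ln ((1 + \<delta> * P * G j) / (1 + \<mu> j * P * g j)) \<le> ln \<theta>"
          using \<delta>pos Ppos Gj j(2) gj by (intro ln_mono) (auto intro!: add_pos_pos divide_pos_pos)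
        finally have "ln (1 + p j * Q j p) - ln (1 + \<mu> j * P * g j) \<le> ln \<theta>" by simp
        then have "\<mu> j * (ln (1 + p j * Q j p) - ln (1 + \<mu> j * P * g j)) \<le> \<mu> j * ln \<theta>"
          using j(2) by (intro mult_left_mono) auto
        also have "\<mu> j * ln \<theta> \<le> \<mu>m * ln \<theta>"
        proof -
          have "0 < (real K * b + 1) / \<mu>m" using \<mu>mpos b1 by (simp add: add_nonneg_pos)
          moreover have "ln \<theta> = - ((real K * b + 1) / \<mu>m)" unfolding \<theta>_def minus_divide_left by simp
          ultimately have "ln \<theta> < 0" by linarith
          then show ?thesis using \<mu>mle[OF j(1,2)] by (intro mult_right_mono_neg) auto
        qed
        finally show ?thesis using ln\<theta> by (simp add: right_diff_distrib)
      qed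
      have "(\<Sum>k\<in>I. \<mu> k * ln (1 + p k * Q k p)) - Lo
          = (\<Sum>k\<in>I. \<mu> k * ln (1 + p k * Q k p) - \<mu> k * ln (1 + \<mu> k * P * g k))"
        unfolding Lo_def by (simp add: sum_subtractf)
      also have "\<dots> = (\<mu> j * ln (1 + p j * Q j p) - \<mu> j * ln (1 + \<mu> j * P * g j)) +
           (\<Sum>k\<in>I - {j}. \<mu> k * ln (1 + p k * Q k p) - \<mu> k * ln (1 + \<mu> k * P * g k))"
        using finI j(1) by (rule sum.remove)
      also have "\<dots> \<le> - (real K * b + 1) + (\<Sum>k\<in>I - {j}. b)"
        using Tj Tk by (intro add_mono sum_mono) auto
      also have "(\<Sum>k\<in>I - {j}. b) = (real K - 1) * b"
        using finI j(1) unfolding I_def by (simp add: card_Diff_singleton of_nat_diff)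
      also have "- (real K * b + 1) + (real K - 1) * b \<le> e" using b1 e by (simp add: algebra_simps)
      finally show ?thesis by simp
    qed
    show "(\<Sum>k=1..K. \<mu> k * ln (1 + p k * Q k p)) \<le>
       (\<Sum>k=1..K. \<mu> k * ln (1 + (\<mu> k * P) * Q k (\<lambda>k. \<mu> k * P))) + e"
      using main Lo_le unfolding I_def by simp
  qed
qed



lemma wsr_ln: "wsr K \<mu> h p = (\<Sum>k=1..K. \<mu> k * ln (1 + p k * Re (quad_H (h k) (matrix_inv (A_mat h p k))))) / ln 2"
  unfolding wsr_def log_def by (simp add: sum_divide_distrib)

theorem theorem7:
  fixes K :: nat and h :: "nat \<Rightarrow> complex ^ 'm" and \<mu> :: "nat \<Rightarrow> real"
  assumes "CARD('m) \<ge> K"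
    and "lin_indep_C K h"
    and "\<And>i j. 1 \<le> i \<Longrightarrow> i \<le> j \<Longrightarrow> j \<le> K \<Longrightarrow> \<mu> j \<le> \<mu> i"
    and "\<And>k. k \<in> {1..K} \<Longrightarrow> 0 \<le> \<mu> k"
    and "(\<Sum>k=1..K. \<mu> k) = 1"
  shows "((\<lambda>P. C_DPC K \<mu> h P - wsr K \<mu> h (\<lambda>k. \<mu> k * P)) \<longlongrightarrow> 0) at_top"
proof -
  have ex: "\<forall>k. \<exists>c v. k \<in> {1..K} \<longrightarrow> (cv (h k) = v + (\<Sum>j\<in>{1..<k}. c j *s cv (h j)) \<and>
      (\<forall>j\<in>{1..<k}. hp (cv (h j)) v = 0) \<and> v \<noteq> 0)"
  proof
    fix k
    obtain c v where cv1: "cv (h k) = v + (\<Sum>j\<in>{1..<k}. c j *s cv (h j))"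
        and cv2: "\<forall>j\<in>{1..<k}. hp (cv (h j)) v = 0"
      by (rule decomp_exists[of "{1..<k}" "cv (h k)" "\<lambda>j. cv (h j)"]) auto
    show "\<exists>c v. k \<in> {1..K} \<longrightarrow> (cv (h k) = v + (\<Sum>j\<in>{1..<k}. c j *s cv (h j)) \<and>
      (\<forall>j\<in>{1..<k}. hp (cv (h j)) v = 0) \<and> v \<noteq> 0)"
      using cv1 cv2 decomp_nonzero[OF assms(2) _ cv1] by blast
  qed
  then obtain cc vv where ccvv: "\<And>k. k \<in> {1..K} \<Longrightarrow> cv (h k) = vv k + (\<Sum>j\<in>{1..<k}. cc k j *s cv (h j)) \<and>
      (\<forall>j\<in>{1..<k}. hp (cv (h j)) (vv k) = 0) \<and> vv k \<noteq> 0"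
    by metis
  define Q where "Q k p = Re (quad_H (h k) (matrix_inv (A_mat h p k)))" for k p
  define g where "g k = Re (hp (vv k) (vv k))" for k
  define G where "G k = Re (hp (cv (h k)) (cv (h k)))" for k
  define C where "C k = (\<Sum>j\<in>{1..<k}. (cmod (cc k j))^2)" for k
  have Qb: "g k \<le> Q k p \<and> Q k p \<le> G k" if "k \<in> {1..K}" "\<forall>j\<in>{1..<k}. 0 \<le> p j" for k p
    using Q_bounds(1,2)[OF that(2), of h "vv k" "cc k"] ccvv[OF that(1)]
    unfolding Q_def g_def G_def by blast
  have Qs: "Q k p \<le> g k + t * G k + C k / (t * m)"
    if "k \<in> {1..K}" "0 < m" "0 < t" "\<forall>j\<in>{1..<k}. m \<le> p j" for k p m t
  proof -
    have nn: "\<forall>j\<in>{1..<k}. 0 \<le> p j" using that(2,4) by (meson less_imp_le order_trans)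
    show ?thesis
      using Q_bounds(3)[OF nn, of h "vv k" "cc k" m t] ccvv[OF that(1)] that(2-4)
      unfolding Q_def g_def G_def C_def by blast
  qed
  have gpos: "0 < g k" if "k \<in> {1..K}" for k
    unfolding g_def using ccvv[OF that] hp_self_pos by blast
  have gG: "g k \<le> G k" if "k \<in> {1..K}" for k
    using Qb[OF that, of "\<lambda>_. 0"] by simp
  have C0: "0 \<le> C k" for k unfolding C_def by (simp add: sum_nonneg)
  have bound: "\<exists>P0>0. \<forall>P\<ge>P0. \<forall>p. (\<forall>k\<in>{1..K}. 0 \<le> p k) \<and> (\<Sum>k=1..K. p k) \<le> P \<longrightarrow>
     (\<Sum>k=1..K. \<mu> k * ln (1 + p k * Q k p)) \<le>
     (\<Sum>k=1..K. \<mu> k * ln (1 + (\<mu> k * P) * Q k (\<lambda>k. \<mu> k * P))) + e" if e: "0 < e" for e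
    by (rule abstract_bound[of K \<mu> g G C Q e]) (use assms(3-5) gpos gG C0 Qb Qs e in auto)
  have wsrQ: "wsr K \<mu> h p = (\<Sum>k=1..K. \<mu> k * ln (1 + p k * Q k p)) / ln 2" for p
    unfolding wsr_ln Q_def ..
  define F where "F P = {p :: nat \<Rightarrow> real. (\<forall>k\<in>{1..K}. 0 \<le> p k) \<and> (\<Sum>k=1..K. p k) \<le> P}" for P :: real
  have CD: "C_DPC K \<mu> h P = (SUP p \<in> F P. wsr K \<mu> h p)" for P
    unfolding C_DPC_def F_def ..
  have ln2: "0 < ln (2::real)" by simp
  show ?thesis
  proof (rule tendstoI)
    fix e :: real assume e: "0 < e"
    obtain P0 where P0: "0 < P0" and PB: "\<And>P p. P0 \<le> P \<Longrightarrow> (\<forall>k\<in>{1..K}. 0 \<le> p k) \<and> (\<Sum>k=1..K. p k) \<le> P \<Longrightarrow>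
     (\<Sum>k=1..K. \<mu> k * ln (1 + p k * Q k p)) \<le>
     (\<Sum>k=1..K. \<mu> k * ln (1 + (\<mu> k * P) * Q k (\<lambda>k. \<mu> k * P))) + e * ln 2 / 2"
      using bound[of "e * ln 2 / 2"] e ln2 by auto
    have "\<forall>P\<ge>P0. dist (C_DPC K \<mu> h P - wsr K \<mu> h (\<lambda>k. \<mu> k * P)) 0 < e"
    proof (intro allI impI)
      fix P assume PP: "P0 \<le> P"
      have Wle: "wsr K \<mu> h p \<le> wsr K \<mu> h (\<lambda>k. \<mu> k * P) + e / 2" if "p \<in> F P" for p
      proof -
        have "(\<Sum>k=1..K. \<mu> k * ln (1 + p k * Q k p)) \<le>
           (\<Sum>k=1..K. \<mu> k * ln (1 + (\<mu> k * P) * Q k (\<lambda>k. \<mu> k * P))) + e * ln 2 / 2"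
          using PB[OF PP] that unfolding F_def by blast
        then have "(\<Sum>k=1..K. \<mu> k * ln (1 + p k * Q k p)) / ln 2 \<le>
           ((\<Sum>k=1..K. \<mu> k * ln (1 + (\<mu> k * P) * Q k (\<lambda>k. \<mu> k * P))) + e * ln 2 / 2) / ln 2"
          using ln2 by (intro divide_right_mono) auto
        also have "\<dots> = (\<Sum>k=1..K. \<mu> k * ln (1 + (\<mu> k * P) * Q k (\<lambda>k. \<mu> k * P))) / ln 2 + e / 2"
          using ln2 by (simp add: add_divide_distrib)
        finally show ?thesis unfolding wsrQ by simp
      qed
      have mem: "(\<lambda>k. \<mu> k * P) \<in> F P"
        unfolding F_def using assms(4,5) P0 PP by (auto simp: sum_distrib_right[symmetric])
      have bdd: "bdd_above (wsr K \<mu> h ` F P)"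
        using Wle by (intro bdd_aboveI2) 
      have lo: "wsr K \<mu> h (\<lambda>k. \<mu> k * P) \<le> C_DPC K \<mu> h P"
        unfolding CD using bdd mem by (rule cSUP_upper2) simp
      have hi: "C_DPC K \<mu> h P \<le> wsr K \<mu> h (\<lambda>k. \<mu> k * P) + e / 2"
        unfolding CD using mem Wle by (intro cSUP_least) auto
      show "dist (C_DPC K \<mu> h P - wsr K \<mu> h (\<lambda>k. \<mu> k * P)) 0 < e"
        using lo hi e by (simp add: dist_real_def)
    qed
    then show "\<forall>\<^sub>F P in at_top. dist (C_DPC K \<mu> h P - wsr K \<mu> h (\<lambda>k. \<mu> k * P)) 0 < e"
      unfolding eventually_at_top_linorder by blast
  qed
qed

end
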